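(* Let $p\in[1,\infty]$, let $Y$ be a complex Banach space, let $(\mathcal G,+)$ be a countable discrete group and $\mathbf X=\ell^p(\mathcal G,Y)$, with $\mathcal P$ and $\mathcal L(\mathbf X,\mathcal P)$ as in the context. Let $(\Omega,\mathcal G,\alpha)$ be a dynamical system and $A:\Omega\to\mathcal L(\mathbf X,\mathcal P)$ a family of operators over it. Then for all $\omega\in\Omega$, $$\sigma^{\mathrm{op}}(A(\omega))=\{A(\nu):\nu\in L(\omega)\}.$$
   Context: $(\mathcal G,+)$ is written additively but need not be abelian. Choose subsets $\mathcal G_n\subseteq\mathcal G$ with $\emptyset\neq\mathcal G_n\neq\mathcal G$, such that for each $m$ there is $N_m$ with $\mathcal G_m\subseteq\mathcal G_n$ for $n\ge N_m$, and $\bigcup_n\mathcal G_n=\mathcal G$; $P_n$ is multiplication by $\mathbf 1_{\mathcal G_n}$, $\mathcal P=(P_n)$. $K\in\mathcal L(\mathbf X)$ is $\mathcal P$-compact if $\|K(I-P_n)\|\to0$ and $\|(I-P_n)K\|\to0$; $\mathcal K(\mathbf X,\mathcal P)$ is the set of these and $\mathcal L(\mathbf X,\mathcal P)=\{A\in\mathcal L(\mathbf X):AK,KA\in\mathcal K(\mathbf X,\mathcal P)\ \forall K\in\mathcal K(\mathbf X,\mathcal P)\}$. $(A_n)$ converges $\mathcal P$-strongly to $A$ ($\mathcal P\text{-}\lim A_n=A$) if $\|K(A_n-A)\|+\|(A_n-A)K\|\to0$ for all $K\in\mathcal K(\mathbf X,\mathcal P)$. $V_gx=(x_{h+g})_{h\in\mathcal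 G}$. $g_n\to\infty$ means $(g_n)$ eventually leaves every finite subset of $\mathcal G$. For $B\in\mathcal L(\mathbf X,\mathcal P)$ and $g=(g_n)$ with $g_n\to\infty$, the limit operator is $B_g:=\mathcal P\text{-}\lim V_{g_n}BV_{-g_n}$ if it exists; $\sigma^{\mathrm{op}}(B)$ (operator spectrum) is the set of all limit operators of $B$. A dynamical system $(\Omega,\mathcal G,\alpha)$: $\Omega$ compact metric space, $\alpha$ maps $\mathcal G$ to homeomorphisms of $\Omega$ with $\alpha(g+h)=\alpha(g)\circ\alpha(h)$. $L(\omega)=\{\nu\in\Omega:\exists g_n\to\infty,\ \alpha(g_n)(\omega)\to\nu\}$. A family of operators over $(\Omega,\mathcal G,\alpha)$ is $A:\Omega\to\mathcal L(\mathbf X,\mathcal P)$ with $A(\alpha(g)(\omega))=V_gA(\omega)V_{-g}$ for all $\omega,g$, and such that $\omega_n\to\omega$ implies $\mathcal P\text{-}\lim A(\omega_n)=A(\omega)$. *)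

theory Defs
  imports "HOL-Analysis.Analysis" "HOL-Library.Countable"
begin

text \<open>A complex Banach space Y is modelled as a real Banach space 'y together with a
 complex structure J (multiplication by i), compatible with the norm.\<close>

definition cscale :: "('y::real_vector \<Rightarrow> 'y) \<Rightarrow> complex \<Rightarrow> 'y \<Rightarrow> 'y" where
  "cscale J c y = Re c *\<^sub>R y + Im c *\<^sub>R J y"

definition complex_structure :: "('y::real_normed_vector \<Rightarrow> 'y) \<Rightarrow> bool" where
  "complex_structure J \<longleftrightarrow> bounded_linear J \<and> (\<forall>y. J (J y) = - y)
     \<and> (\<forall>c y. norm (cscale J c y) = cmod c * norm y)"

definition lp_mem :: "ennreal \<Rightarrow> ('g \<Rightarrow> 'y::real_normed_vector) \<Rightarrow> bool" where
  "lp_mem p x \<longleftrightarrow> (if p = (top::ennreal) then bounded (range (\<lambda>g. norm (x g)))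
                     else (\<lambda>g. norm (x g) powr enn2real p) summable_on UNIV)"

definition lpX :: "ennreal \<Rightarrow> ('g \<Rightarrow> 'y::real_normed_vector) set" where
  "lpX p = {x. lp_mem p x}"

definition lp_norm :: "ennreal \<Rightarrow> ('g \<Rightarrow> 'y::real_normed_vector) \<Rightarrow> real" where
  "lp_norm p x = (if p = (top::ennreal) then (SUP g. norm (x g))
                  else (\<Sum>\<^sub>\<infinity>g. norm (x g) powr enn2real p) powr (1 / enn2real p))"

text \<open>An operator is represented as a
 function on all of 'g => 'y which vanishes outside l^p (extensional convention), so that
 equality of operators is equality of functions.\<close>

definition is_op :: "ennreal \<Rightarrow> ('y::real_normed_vector \<Rightarrow> 'y) \<Rightarrow>
    (('g \<Rightarrow> 'y) \<Rightarrow> ('g \<Rightarrow> 'y)) \<Rightarrow> bool" where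
  "is_op p J A \<longleftrightarrow>
     (\<forall>x\<in>lpX p. A x \<in> lpX p)
   \<and> (\<forall>x\<in>lpX p. \<forall>y\<in>lpX p. A (\<lambda>g. x g + y g) = (\<lambda>g. A x g + A y g))
   \<and> (\<forall>c. \<forall>x\<in>lpX p. A (\<lambda>g. cscale J c (x g)) = (\<lambda>g. cscale J c (A x g)))
   \<and> (\<exists>C. \<forall>x\<in>lpX p. lp_norm p (A x) \<le> C * lp_norm p x)
   \<and> (\<forall>x. x \<notin> lpX p \<longrightarrow> A x = (\<lambda>_. 0))"

definition opnorm :: "ennreal \<Rightarrow> (('g \<Rightarrow> 'y::real_normed_vector) \<Rightarrow> ('g \<Rightarrow> 'y)) \<Rightarrow> real" where
  "opnorm p A = Sup {lp_norm p (A x) | x. x \<in> lpX p \<and> lp_norm p x \<le> 1}"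

definition opdiff :: "(('g \<Rightarrow> 'y::ab_group_add) \<Rightarrow> ('g \<Rightarrow> 'y)) \<Rightarrow> (('g \<Rightarrow> 'y) \<Rightarrow> ('g \<Rightarrow> 'y))
    \<Rightarrow> ('g \<Rightarrow> 'y) \<Rightarrow> ('g \<Rightarrow> 'y)" where
  "opdiff A B = (\<lambda>x g. A x g - B x g)"

text \<open>I - P_n, where P_n is multiplication by the indicator of Gs n.\<close>
definition IminusP :: "ennreal \<Rightarrow> (nat \<Rightarrow> 'g set) \<Rightarrow> nat \<Rightarrow> ('g \<Rightarrow> 'y::real_normed_vector) \<Rightarrow> ('g \<Rightarrow> 'y)" where
  "IminusP p Gs n = (\<lambda>x. if x \<in> lpX p then (\<lambda>g. if g \<in> Gs n then 0 else x g) else (\<lambda>_. 0))"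

definition Vop :: "ennreal \<Rightarrow> 'g::group_add \<Rightarrow> ('g \<Rightarrow> 'y::real_normed_vector) \<Rightarrow> ('g \<Rightarrow> 'y)" where
  "Vop p g = (\<lambda>x. if x \<in> lpX p then (\<lambda>h. x (h + g)) else (\<lambda>_. 0))"

definition admissible_Gs :: "(nat \<Rightarrow> 'g set) \<Rightarrow> bool" where
  "admissible_Gs Gs \<longleftrightarrow> (\<forall>n. Gs n \<noteq> {} \<and> Gs n \<noteq> UNIV)
     \<and> (\<forall>m. \<exists>N. \<forall>n\<ge>N. Gs m \<subseteq> Gs n) \<and> (\<Union>n. Gs n) = UNIV"

definition Pcompact :: "ennreal \<Rightarrow> ('y::real_normed_vector \<Rightarrow> 'y) \<Rightarrow> (nat \<Rightarrow> 'g set) \<Rightarrow>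
    (('g \<Rightarrow> 'y) \<Rightarrow> ('g \<Rightarrow> 'y)) \<Rightarrow> bool" where
  "Pcompact p J Gs K \<longleftrightarrow> is_op p J K
     \<and> (\<lambda>n. opnorm p (K \<circ> IminusP p Gs n)) \<longlonglongrightarrow> 0
     \<and> (\<lambda>n. opnorm p (IminusP p Gs n \<circ> K)) \<longlonglongrightarrow> 0"

definition LXP :: "ennreal \<Rightarrow> ('y::real_normed_vector \<Rightarrow> 'y) \<Rightarrow> (nat \<Rightarrow> 'g set) \<Rightarrow>
    (('g \<Rightarrow> 'y) \<Rightarrow> ('g \<Rightarrow> 'y)) set" where
  "LXP p J Gs = {A. is_op p J A \<and>
     (\<forall>K. Pcompact p J Gs K \<longrightarrow> Pcompact p J Gs (A \<circ> K) \<and> Pcompact p J Gs (K \<circ> A))}"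

definition Plim :: "ennreal \<Rightarrow> ('y::real_normed_vector \<Rightarrow> 'y) \<Rightarrow> (nat \<Rightarrow> 'g set) \<Rightarrow>
    (nat \<Rightarrow> ('g \<Rightarrow> 'y) \<Rightarrow> ('g \<Rightarrow> 'y)) \<Rightarrow> (('g \<Rightarrow> 'y) \<Rightarrow> ('g \<Rightarrow> 'y)) \<Rightarrow> bool" where
  "Plim p J Gs An A \<longleftrightarrow> A \<in> LXP p J Gs \<and>
     (\<forall>K. Pcompact p J Gs K \<longrightarrow>
        (\<lambda>n. opnorm p (K \<circ> opdiff (An n) A) + opnorm p (opdiff (An n) A \<circ> K)) \<longlonglongrightarrow> 0)"

definition tends_to_inf :: "(nat \<Rightarrow> 'g) \<Rightarrow> bool" where
  "tends_to_inf g \<longleftrightarrow> (\<forall>F. finite F \<longrightarrow> eventually (\<lambda>n. g n \<notin> F) sequentially)"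

definition op_spectrum :: "ennreal \<Rightarrow> ('y::real_normed_vector \<Rightarrow> 'y) \<Rightarrow> (nat \<Rightarrow> 'g::group_add set) \<Rightarrow>
    (('g \<Rightarrow> 'y) \<Rightarrow> ('g \<Rightarrow> 'y)) \<Rightarrow> (('g \<Rightarrow> 'y) \<Rightarrow> ('g \<Rightarrow> 'y)) set" where
  "op_spectrum p J Gs B = {C. \<exists>g. tends_to_inf g \<and>
      Plim p J Gs (\<lambda>n. Vop p (g n) \<circ> B \<circ> Vop p (- g n)) C}"

definition dyn_system :: "('g::group_add \<Rightarrow> 'w::metric_space \<Rightarrow> 'w) \<Rightarrow> bool" where
  "dyn_system \<alpha> \<longleftrightarrow> compact (UNIV :: 'w set)
     \<and> (\<forall>g. \<exists>h. homeomorphism UNIV UNIV (\<alpha> g) h)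
     \<and> (\<forall>g h. \<alpha> (g + h) = \<alpha> g \<circ> \<alpha> h)"

definition limit_set :: "('g \<Rightarrow> 'w::topological_space \<Rightarrow> 'w) \<Rightarrow> 'w \<Rightarrow> 'w set" where
  "limit_set \<alpha> \<omega> = {\<nu>. \<exists>g. tends_to_inf g \<and> (\<lambda>n. \<alpha> (g n) \<omega>) \<longlonglongrightarrow> \<nu>}"

definition op_family :: "ennreal \<Rightarrow> ('y::real_normed_vector \<Rightarrow> 'y) \<Rightarrow> (nat \<Rightarrow> 'g::group_add set) \<Rightarrow>
    ('g \<Rightarrow> 'w::metric_space \<Rightarrow> 'w) \<Rightarrow> ('w \<Rightarrow> ('g \<Rightarrow> 'y) \<Rightarrow> ('g \<Rightarrow> 'y)) \<Rightarrow> bool" where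
  "op_family p J Gs \<alpha> A \<longleftrightarrow> (\<forall>\<omega>. A \<omega> \<in> LXP p J Gs)
     \<and> (\<forall>\<omega> g. A (\<alpha> g \<omega>) = Vop p g \<circ> A \<omega> \<circ> Vop p (- g))
     \<and> (\<forall>\<omega>s \<omega>. \<omega>s \<longlonglongrightarrow> \<omega> \<longrightarrow> Plim p J Gs (\<lambda>n. A (\<omega>s n)) (A \<omega>))"

end

theory Submission
  imports Defs
begin


lemma q_ge1: assumes "p \<ge> (1::ennreal)" "p \<noteq> top" shows "enn2real p \<ge> 1"
proof -
  have "enn2real 1 \<le> enn2real p" using assms by (intro enn2real_mono) (auto simp: top.not_eq_extremum)
  thus ?thesis by simp
qed

lemma lp_zero: "(\<lambda>_. 0) \<in> lpX p" "lp_norm p (\<lambda>_::'g. 0::'y::real_normed_vector) = 0"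
  by (auto simp: lpX_def lp_mem_def lp_norm_def)

lemma lp_norm_nonneg: assumes "x \<in> lpX p" shows "0 \<le> lp_norm p x"
proof (cases "p = top")
  case True
  then have "bounded (range (\<lambda>g. norm (x g)))" using assms by (simp add: lpX_def lp_mem_def)
  then have "bdd_above (range (\<lambda>g. norm (x g)))" by (rule bounded_imp_bdd_above)
  then have "norm (x undefined) \<le> (SUP g. norm (x g))" using cSUP_upper[OF UNIV_I, of "\<lambda>g. norm (x g)"] by blast
  then show ?thesis using True by (simp add: lp_norm_def) (meson norm_ge_zero order_trans)
qed (simp add: lp_norm_def)

lemma lp_coord: assumes "p \<ge> 1" "x \<in> lpX p" shows "norm (x g) \<le> lp_norm p x"
proof (cases "p = top")
  case True
  then have "bounded (range (\<lambda>g. norm (x g)))" using assms by (simp add: lpX_def lp_mem_def)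
  then have "bdd_above (range (\<lambda>g. norm (x g)))" by (rule bounded_imp_bdd_above)
  then have "norm (x g) \<le> (SUP g. norm (x g))" using cSUP_upper[OF UNIV_I, of "\<lambda>g. norm (x g)"] by blast
  then show ?thesis using True by (simp add: lp_norm_def)
next
  case False
  define q where "q = enn2real p"
  have q: "q \<ge> 1" using q_ge1[OF assms(1) False] q_def by simp
  have sm: "(\<lambda>g. norm (x g) powr q) summable_on UNIV" using assms False by (simp add: lpX_def lp_mem_def q_def)
  have "infsum (\<lambda>g. norm (x g) powr q) {g} \<le> infsum (\<lambda>g. norm (x g) powr q) UNIV"
    by (rule infsum_mono_neutral) (auto simp: sm)
  then have "norm (x g) powr q \<le> infsum (\<lambda>g. norm (x g) powr q) UNIV" by simp
  then have "(norm (x g) powr q) powr (1/q) \<le> infsum (\<lambda>g. norm (x g) powr q) UNIV powr (1/q)"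
    using q by (intro powr_mono2) auto
  moreover have "(norm (x g) powr q) powr (1/q) = norm (x g)" using q by (simp add: powr_powr)
  ultimately show ?thesis using False by (simp add: lp_norm_def q_def)
qed


lemma pow_max_le: fixes a b q :: real assumes "a \<ge> 0" "b \<ge> 0" "q \<ge> 0"
  shows "max a b powr q \<le> a powr q + b powr q"
  using assms by (cases "a \<le> b") (auto simp: max_def)

lemma lp_dom:
  assumes p: "p \<ge> 1" and x: "x \<in> lpX p" and y: "y \<in> lpX p" and k: "k \<ge> 0"
    and dom: "\<And>g. norm (z g) \<le> k * (norm (x g) + norm (y g))"
  shows "z \<in> lpX p \<and> lp_norm p z \<le> 4 * k * (lp_norm p x + lp_norm p y)"
proof (cases "p = top")
  case True
  have bx: "bdd_above (range (\<lambda>g. norm (x g)))" using x True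
    by (simp add: lpX_def lp_mem_def bounded_imp_bdd_above)
  have by': "bdd_above (range (\<lambda>g. norm (y g)))" using y True
    by (simp add: lpX_def lp_mem_def bounded_imp_bdd_above)
  have lx: "norm (x g) \<le> lp_norm p x" for g using lp_coord[OF p x] .
  have ly: "norm (y g) \<le> lp_norm p y" for g using lp_coord[OF p y] .
  have zb: "norm (z g) \<le> k * (lp_norm p x + lp_norm p y)" for g
    using dom[of g] lx[of g] ly[of g] k by (smt (verit) mult_left_mono)
  have "bounded (range (\<lambda>g. norm (z g)))"
    unfolding bounded_iff using zb by auto
  then have zl: "z \<in> lpX p" using True by (simp add: lpX_def lp_mem_def)
  have "(SUP g. norm (z g)) \<le> k * (lp_norm p x + lp_norm p y)"
    by (rule cSUP_least) (use zb in auto)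
  then have "lp_norm p z \<le> k * (lp_norm p x + lp_norm p y)"
    using True by (simp add: lp_norm_def)
  moreover have "0 \<le> k * (lp_norm p x + lp_norm p y)"
    using k lp_norm_nonneg[OF x] lp_norm_nonneg[OF y] by simp
  ultimately show ?thesis using zl by simp
next
  case False
  define q where "q = enn2real p"
  have q: "q \<ge> 1" using q_ge1[OF p False] q_def by simp
  define a where "a = (\<lambda>g. norm (x g) powr q)"
  define b where "b = (\<lambda>g. norm (y g) powr q)"
  define c where "c = (\<lambda>g. norm (z g) powr q)"
  have sa: "a summable_on UNIV" using x False by (simp add: lpX_def lp_mem_def q_def a_def)
  have sb: "b summable_on UNIV" using y False by (simp add: lpX_def lp_mem_def q_def b_def)
  have cb: "c g \<le> (2*k) powr q * (a g + b g)" for g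
  proof -
    have m: "norm (x g) + norm (y g) \<le> 2 * max (norm (x g)) (norm (y g))" by linarith
    have "norm (z g) \<le> k * (2 * max (norm (x g)) (norm (y g)))"
      using dom[of g] mult_left_mono[OF m k] by linarith
    then have "norm (z g) \<le> (2*k) * max (norm (x g)) (norm (y g))" by simp
    then have "c g \<le> ((2*k) * max (norm (x g)) (norm (y g))) powr q"
      unfolding c_def using q by (intro powr_mono2) (auto simp del: mult_2)
    also have "\<dots> = (2*k) powr q * max (norm (x g)) (norm (y g)) powr q"
      using k by (simp add: powr_mult)
    also have "\<dots> \<le> (2*k) powr q * (a g + b g)"
      unfolding a_def b_def using q by (intro mult_left_mono pow_max_le) auto
    finally show ?thesis .
  qed
  have sab: "(\<lambda>g. (2*k) powr q * (a g + b g)) summable_on UNIV"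
    by (intro summable_on_cmult_right summable_on_add sa sb)
  have sc: "c summable_on UNIV"
    by (rule summable_on_comparison_test[OF sab], rule cb, simp add: c_def)
  then have zl: "z \<in> lpX p" using False by (simp add: lpX_def lp_mem_def q_def c_def)
  define Sa where "Sa = infsum a UNIV"
  define Sb where "Sb = infsum b UNIV"
  define Sc where "Sc = infsum c UNIV"
  have Sa0: "Sa \<ge> 0" unfolding Sa_def a_def by (rule infsum_nonneg) auto
  have Sb0: "Sb \<ge> 0" unfolding Sb_def b_def by (rule infsum_nonneg) auto
  have "Sc \<le> infsum (\<lambda>g. (2*k) powr q * (a g + b g)) UNIV"
    unfolding Sc_def by (rule infsum_mono[OF sc sab cb])
  also have "\<dots> = (2*k) powr q * (Sa + Sb)"
    by (simp add: infsum_cmult_right' infsum_add sa sb Sa_def Sb_def)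
  finally have Sc: "Sc \<le> (2*k) powr q * (Sa + Sb)" .
  have Sc0: "Sc \<ge> 0" unfolding Sc_def c_def by (rule infsum_nonneg) auto
  have "Sc powr (1/q) \<le> ((2*k) powr q * (Sa + Sb)) powr (1/q)"
    using q Sc0 Sc by (intro powr_mono2) auto
  also have "\<dots> = (2*k) * (Sa + Sb) powr (1/q)"
    using q k Sa0 Sb0 by (simp add: powr_mult powr_powr)
  also have "(Sa + Sb) powr (1/q) \<le> (2 * max Sa Sb) powr (1/q)"
    using q Sa0 Sb0 by (intro powr_mono2) auto
  also have "\<dots> = 2 powr (1/q) * max Sa Sb powr (1/q)"
    using Sa0 Sb0 by (simp add: powr_mult)
  also have "\<dots> \<le> 2 * (Sa powr (1/q) + Sb powr (1/q))"
  proof (intro mult_mono pow_max_le)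
    have "2 powr (1/q) \<le> 2 powr 1" using q by (intro powr_mono) auto
    then show "2 powr (1/q) \<le> (2::real)" by simp
  qed (use q Sa0 Sb0 in auto)
  finally have "Sc powr (1/q) \<le> 2 * k * (2 * (Sa powr (1/q) + Sb powr (1/q)))"
    using k by (simp add: mult_left_mono)
  moreover have "lp_norm p z = Sc powr (1/q)" "lp_norm p x = Sa powr (1/q)" "lp_norm p y = Sb powr (1/q)"
    using False unfolding lp_norm_def q_def Sa_def Sb_def Sc_def a_def b_def c_def by simp_all
  ultimately have "lp_norm p z \<le> 4 * k * (lp_norm p x + lp_norm p y)"
    by (simp add: algebra_simps)
  with zl show ?thesis by simp
qed




lemma opnorm_props:
  assumes T: "\<And>x. x \<in> lpX p \<Longrightarrow> lp_norm p x \<le> 1 \<Longrightarrow> T x \<in> lpX p \<and> lp_norm p (T x) \<le> M"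
  shows "0 \<le> opnorm p T" "\<And>x. x \<in> lpX p \<Longrightarrow> lp_norm p x \<le> 1 \<Longrightarrow> lp_norm p (T x) \<le> opnorm p T"
proof -
  define S where "S = {lp_norm p (T x) | x. x \<in> lpX p \<and> lp_norm p x \<le> 1}"
  have bdd: "bdd_above S" unfolding S_def bdd_above_def using T by blast
  have z: "lp_norm p (T (\<lambda>_. 0)) \<in> S" unfolding S_def
    by (rule CollectI, rule exI[of _ "\<lambda>_. 0"]) (simp add: lp_zero)
  have "T (\<lambda>_. 0) \<in> lpX p" using T[OF lp_zero(1)] by (simp add: lp_zero)
  then have "0 \<le> lp_norm p (T (\<lambda>_. 0))" by (rule lp_norm_nonneg)
  also have "\<dots> \<le> Sup S" by (rule cSup_upper[OF z bdd])
  finally show "0 \<le> opnorm p T" by (simp add: opnorm_def S_def)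
  show "lp_norm p (T x) \<le> opnorm p T" if "x \<in> lpX p" "lp_norm p x \<le> 1" for x
  proof -
    have "lp_norm p (T x) \<in> S" unfolding S_def using that by blast
    then show ?thesis using cSup_upper[OF _ bdd] by (simp add: opnorm_def S_def)
  qed
qed

lemma opnorm_zero: "opnorm p (\<lambda>x (_::'g). (0::'y::real_normed_vector)) = 0"
proof -
  have "{lp_norm p ((\<lambda>x (_::'g). (0::'y)) x) | x. x \<in> lpX p \<and> lp_norm p x \<le> 1} = {0}"
    by (auto simp: lp_zero intro!: exI[of _ "\<lambda>_. 0"])
  then show ?thesis unfolding opnorm_def by (metis cSup_singleton)
qed

lemma is_op_bound: fixes A :: "('g \<Rightarrow> 'y::real_normed_vector) \<Rightarrow> ('g \<Rightarrow> 'y)"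
  assumes "is_op p J A"
  shows "\<exists>C\<ge>0. \<forall>x\<in>lpX p. A x \<in> lpX p \<and> lp_norm p (A x) \<le> C * lp_norm p x"
proof -
  obtain C where C: "\<forall>x\<in>lpX p. lp_norm p (A x) \<le> C * lp_norm p x" using assms by (auto simp: is_op_def)
  have "\<forall>x\<in>lpX p. A x \<in> lpX p \<and> lp_norm p (A x) \<le> max C 0 * lp_norm p x"
  proof
    fix x :: "'g \<Rightarrow> 'y" assume x: "x \<in> lpX p"
    have "C * lp_norm p x \<le> max C 0 * lp_norm p x"
      using lp_norm_nonneg[OF x] by (intro mult_right_mono) auto
    then show "A x \<in> lpX p \<and> lp_norm p (A x) \<le> max C 0 * lp_norm p x"
      using C x assms by (auto simp: is_op_def)
  qed
  then show ?thesis by (intro exI[of _ "max C 0"]) auto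
qed

definition Kop :: "ennreal \<Rightarrow> 'g \<Rightarrow> ('g \<Rightarrow> 'y::real_normed_vector) \<Rightarrow> ('g \<Rightarrow> 'y)" where
  "Kop p g0 = (\<lambda>x. if x \<in> lpX p then (\<lambda>g. if g = g0 then x g0 else 0) else (\<lambda>_. 0))"

lemma delta_lp: assumes "p \<ge> 1" "x \<in> lpX p"
  shows "(\<lambda>g. if g = g0 then x g0 else 0) \<in> lpX p \<and> lp_norm p (\<lambda>g. if g = g0 then x g0 else 0) \<le> 4 * lp_norm p x"
  using lp_dom[OF assms assms(2), of "1/2" "\<lambda>g. if g = g0 then x g0 else 0"] by auto

lemma cscale_of_real[simp]: "cscale J (complex_of_real t) y = t *\<^sub>R y"
  by (simp add: cscale_def)

lemma cscale_zero: "complex_structure J \<Longrightarrow> cscale J c 0 = 0"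
  by (simp add: cscale_def complex_structure_def linear_simps)

lemma Kop_is_op: fixes J :: "'y::real_normed_vector \<Rightarrow> 'y" and g0 :: 'g
  assumes p: "p \<ge> 1" and J: "complex_structure J" shows "is_op p J (Kop p g0)"
  unfolding is_op_def
proof (intro conjI ballI allI impI)
  fix x :: "'g \<Rightarrow> 'y" assume x: "x \<in> lpX p" then show "Kop p g0 x \<in> lpX p" using delta_lp[OF p x] by (simp add: Kop_def)
next
  fix x y :: "'g \<Rightarrow> 'y" assume x: "x \<in> lpX p" and y: "y \<in> lpX p"
  have "(\<lambda>g. x g + y g) \<in> lpX p"
    by (rule conjunct1[OF lp_dom[OF p x y, of 1]]) (simp_all add: norm_triangle_ineq)
  then show "Kop p g0 (\<lambda>g. x g + y g) = (\<lambda>g. Kop p g0 x g + Kop p g0 y g)"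
    using x y by (auto simp: Kop_def)
next
  fix c and x :: "'g \<Rightarrow> 'y" assume x: "x \<in> lpX p"
  have "(\<lambda>g. cscale J c (x g)) \<in> lpX p"
    by (rule conjunct1[OF lp_dom[OF p x x, of "cmod c / 2"]]) (use J in \<open>simp_all add: complex_structure_def\<close>)
  then show "Kop p g0 (\<lambda>g. cscale J c (x g)) = (\<lambda>g. cscale J c (Kop p g0 x g))"
    using x cscale_zero[OF J] by (auto simp: Kop_def)
next
  show "\<exists>C. \<forall>x\<in>lpX p. lp_norm p (Kop p g0 x) \<le> C * lp_norm p x"
    apply (rule exI[of _ 4], intro ballI)
    subgoal for x using delta_lp[OF p, of x g0] by (simp add: Kop_def)
    done
next
  fix x :: "'g \<Rightarrow> 'y" assume "x \<notin> lpX p" then show "Kop p g0 x = (\<lambda>_. 0)" by (simp add: Kop_def)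
qed

lemma ev_in_Gs: assumes "admissible_Gs Gs" shows "eventually (\<lambda>n. g0 \<in> Gs n) sequentially"
proof -
  obtain m where "g0 \<in> Gs m" using assms unfolding admissible_Gs_def by blast
  moreover obtain N where "\<forall>n\<ge>N. Gs m \<subseteq> Gs n" using assms unfolding admissible_Gs_def by blast
  ultimately show ?thesis unfolding eventually_sequentially by blast
qed

lemma Kop_Pcompact: assumes p: "p \<ge> 1" and J: "complex_structure J" and G: "admissible_Gs Gs"
  shows "Pcompact p J Gs (Kop p g0)"
  unfolding Pcompact_def
proof (intro conjI Kop_is_op[OF p J])
  have "eventually (\<lambda>n. Kop p g0 \<circ> IminusP p Gs n = (\<lambda>x _. 0)) sequentially"
    using ev_in_Gs[OF G, of g0] by eventually_elim (auto simp: Kop_def IminusP_def fun_eq_iff)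
  then have "eventually (\<lambda>n. opnorm p (Kop p g0 \<circ> IminusP p Gs n) = 0) sequentially"
    by eventually_elim (erule ssubst, rule opnorm_zero)
  then show "(\<lambda>n. opnorm p (Kop p g0 \<circ> IminusP p Gs n)) \<longlonglongrightarrow> 0"
    by (rule tendsto_eventually)
  have "eventually (\<lambda>n. IminusP p Gs n \<circ> Kop p g0 = (\<lambda>x _. 0)) sequentially"
    using ev_in_Gs[OF G, of g0] by eventually_elim (auto simp: Kop_def IminusP_def fun_eq_iff)
  then have "eventually (\<lambda>n. opnorm p (IminusP p Gs n \<circ> Kop p g0) = 0) sequentially"
    by eventually_elim (erule ssubst, rule opnorm_zero)
  then show "(\<lambda>n. opnorm p (IminusP p Gs n \<circ> Kop p g0)) \<longlonglongrightarrow> 0"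
    by (rule tendsto_eventually)
qed




lemma diff_bound:
  fixes D B :: "('g \<Rightarrow> 'y::real_normed_vector) \<Rightarrow> ('g \<Rightarrow> 'y)"
  assumes p: "p \<ge> 1" and D: "is_op p J D" and B: "is_op p J B"
  shows "\<exists>M\<ge>0. \<forall>x\<in>lpX p. opdiff D B x \<in> lpX p \<and> lp_norm p (opdiff D B x) \<le> M * lp_norm p x"
proof -
  obtain C1 where C1: "C1 \<ge> 0" "\<forall>x\<in>lpX p. D x \<in> lpX p \<and> lp_norm p (D x) \<le> C1 * lp_norm p x"
    using is_op_bound[OF D] by blast
  obtain C2 where C2: "C2 \<ge> 0" "\<forall>x\<in>lpX p. B x \<in> lpX p \<and> lp_norm p (B x) \<le> C2 * lp_norm p x"
    using is_op_bound[OF B] by blast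
  have "\<forall>x\<in>lpX p. opdiff D B x \<in> lpX p \<and> lp_norm p (opdiff D B x) \<le> (4 * (C1 + C2)) * lp_norm p x"
  proof
    fix x :: "'g \<Rightarrow> 'y" assume x: "x \<in> lpX p"
    have Dx: "D x \<in> lpX p" and Bx: "B x \<in> lpX p" using C1 C2 x by auto
    have *: "opdiff D B x \<in> lpX p \<and> lp_norm p (opdiff D B x) \<le> 4 * 1 * (lp_norm p (D x) + lp_norm p (B x))"
      by (rule lp_dom[OF p Dx Bx]) (simp_all add: opdiff_def norm_triangle_ineq4)
    have "4 * 1 * (lp_norm p (D x) + lp_norm p (B x)) \<le> 4 * (C1 * lp_norm p x + C2 * lp_norm p x)"
      using C1 C2 x by (simp add: add_mono)
    then show "opdiff D B x \<in> lpX p \<and> lp_norm p (opdiff D B x) \<le> (4 * (C1 + C2)) * lp_norm p x"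
      using * by (simp add: algebra_simps)
  qed
  then show ?thesis using C1 C2 by (intro exI[of _ "4 * (C1 + C2)"]) auto
qed

lemma key_bound:
  fixes D B :: "('g \<Rightarrow> 'y::real_normed_vector) \<Rightarrow> ('g \<Rightarrow> 'y)" and J :: "'y \<Rightarrow> 'y"
  assumes p: "p \<ge> 1" and D: "is_op p J D" and B: "is_op p J B"
    and x: "x \<in> lpX p" and x1: "lp_norm p x \<le> 1"
  shows "norm (D x g0 - B x g0) \<le> opnorm p (Kop p g0 \<circ> opdiff D B) + opnorm p (opdiff D B \<circ> Kop p g0)"
proof -
  obtain M where M: "M \<ge> 0" "\<forall>x\<in>lpX p. opdiff D B x \<in> lpX p \<and> lp_norm p (opdiff D B x) \<le> M * lp_norm p x"
    using diff_bound[OF p D B] by blast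
  have T1: "(Kop p g0 \<circ> opdiff D B) y \<in> lpX p \<and> lp_norm p ((Kop p g0 \<circ> opdiff D B) y) \<le> 4 * M"
    if y: "y \<in> lpX p" "lp_norm p y \<le> 1" for y
  proof -
    have oy: "opdiff D B y \<in> lpX p" "lp_norm p (opdiff D B y) \<le> M * lp_norm p y" using M y by auto
    have "M * lp_norm p y \<le> M" using M y mult_left_mono[of "lp_norm p y" 1 M] by simp
    then show ?thesis using delta_lp[OF p oy(1), of g0] oy by (simp add: Kop_def)
  qed
  have T2: "(opdiff D B \<circ> Kop p g0) y \<in> lpX p \<and> lp_norm p ((opdiff D B \<circ> Kop p g0) y) \<le> M * 4"
    if y: "y \<in> lpX p" "lp_norm p y \<le> 1" for y
  proof -
    have ky: "Kop p g0 y \<in> lpX p" "lp_norm p (Kop p g0 y) \<le> 4" using delta_lp[OF p y(1), of g0] y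
      by (simp_all add: Kop_def)
    then have "M * lp_norm p (Kop p g0 y) \<le> M * 4" using M by (intro mult_left_mono) auto
    then show ?thesis using M ky by auto
  qed
  have "norm (D x g0 - B x g0) = norm ((Kop p g0 \<circ> opdiff D B) x g0)"
    using M x by (simp add: Kop_def opdiff_def)
  also have "\<dots> \<le> lp_norm p ((Kop p g0 \<circ> opdiff D B) x)"
    by (rule lp_coord[OF p]) (use T1[OF x x1] in simp)
  also have "\<dots> \<le> opnorm p (Kop p g0 \<circ> opdiff D B)"
    by (rule opnorm_props(2)[of p _ "4*M"]) (use T1 x x1 in blast)+
  also have "\<dots> \<le> opnorm p (Kop p g0 \<circ> opdiff D B) + opnorm p (opdiff D B \<circ> Kop p g0)"
  proof -
    have "0 \<le> opnorm p (opdiff D B \<circ> Kop p g0)"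
      by (rule opnorm_props(1)[of p _ "M*4"]) (use T2 in blast)
    then show ?thesis by simp
  qed
  finally show ?thesis .
qed

lemma Plim_unique:
  fixes An :: "nat \<Rightarrow> ('g \<Rightarrow> 'y::real_normed_vector) \<Rightarrow> ('g \<Rightarrow> 'y)" and J :: "'y \<Rightarrow> 'y"
  assumes p: "p \<ge> 1" and J: "complex_structure J" and G: "admissible_Gs Gs"
    and An: "\<And>n. is_op p J (An n)" and PB: "Plim p J Gs An B" and PC: "Plim p J Gs An C"
  shows "B = C"
proof -
  have B: "is_op p J B" using PB by (simp add: Plim_def LXP_def)
  have C: "is_op p J C" using PC by (simp add: Plim_def LXP_def)
  have small: "B x g0 = C x g0" if x: "x \<in> lpX p" "lp_norm p x \<le> 1" for x g0
  proof -
    have K: "Pcompact p J Gs (Kop p g0)" by (rule Kop_Pcompact[OF p J G])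
    define hB where "hB n = opnorm p (Kop p g0 \<circ> opdiff (An n) B) + opnorm p (opdiff (An n) B \<circ> Kop p g0)" for n
    define hC where "hC n = opnorm p (Kop p g0 \<circ> opdiff (An n) C) + opnorm p (opdiff (An n) C \<circ> Kop p g0)" for n
    have "hB \<longlonglongrightarrow> 0" using PB K unfolding Plim_def hB_def by blast
    moreover have "hC \<longlonglongrightarrow> 0" using PC K unfolding Plim_def hC_def by blast
    ultimately have lim: "(\<lambda>n. hB n + hC n) \<longlonglongrightarrow> 0" using tendsto_add[of hB 0 _ hC 0] by simp
    have "norm (B x g0 - C x g0) \<le> hB n + hC n" for n
    proof -
      have e: "B x g0 - C x g0 = (An n x g0 - C x g0) - (An n x g0 - B x g0)" by simp
      have "norm (B x g0 - C x g0) \<le> norm (An n x g0 - B x g0) + norm (An n x g0 - C x g0)"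
        unfolding e using norm_triangle_ineq4[of "An n x g0 - C x g0" "An n x g0 - B x g0"] by linarith
      also have "\<dots> \<le> hB n + hC n"
        unfolding hB_def hC_def
        by (intro add_mono key_bound[OF p An B x] key_bound[OF p An C x])
      finally show ?thesis .
    qed
    then have "norm (B x g0 - C x g0) \<le> 0" by (intro LIMSEQ_le_const[OF lim]) auto
    then show ?thesis by simp
  qed
  show "B = C"
  proof (rule ext)
    fix x :: "'g \<Rightarrow> 'y"
    show "B x = C x"
    proof (cases "x \<in> lpX p")
      case False then show ?thesis using B C by (simp add: is_op_def)
    next
      case True
      define L where "L = lp_norm p x"
      have L0: "L \<ge> 0" using lp_norm_nonneg[OF True] L_def by simp
      define s where "s = 1 / (4 * L + 1)"
      have s0: "s > 0" using L0 by (simp add: s_def)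
      define y where "y = (\<lambda>g. cscale J (complex_of_real s) (x g))"
      have yx: "y = (\<lambda>g. s *\<^sub>R x g)" by (simp add: y_def)
      have yl: "y \<in> lpX p \<and> lp_norm p y \<le> 4 * (s/2) * (L + L)"
        unfolding L_def by (rule lp_dom[OF p True True]) (use s0 in \<open>simp_all add: yx\<close>)
      have "4 * (s/2) * (L + L) = 4 * L / (4 * L + 1)" using L0 by (simp add: s_def field_simps)
      also have "\<dots> \<le> 1" using L0 by simp
      finally have y1: "lp_norm p y \<le> 1" using yl by simp
      have "B y = (\<lambda>g. cscale J (complex_of_real s) (B x g))"
        using B True unfolding is_op_def y_def by blast
      moreover have "C y = (\<lambda>g. cscale J (complex_of_real s) (C x g))"
        using C True unfolding is_op_def y_def by blast
      ultimately have "B y = (\<lambda>g. s *\<^sub>R B x g)" "C y = (\<lambda>g. s *\<^sub>R C x g)" by simp_all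
      then have "s *\<^sub>R B x g = s *\<^sub>R C x g" for g using small[OF conjunct1[OF yl] y1, of g] by metis
      then show ?thesis using s0 by (auto simp: fun_eq_iff)
    qed
  qed
qed

lemma Plim_subseq:
  assumes "Plim p J Gs An B" "strict_mono r"
  shows "Plim p J Gs (\<lambda>n. An (r n)) B"
  unfolding Plim_def
proof (intro conjI allI impI)
  show "B \<in> LXP p J Gs" using assms(1) by (simp add: Plim_def)
  fix K assume K: "Pcompact p J Gs K"
  have "(\<lambda>n. opnorm p (K \<circ> opdiff (An n) B) + opnorm p (opdiff (An n) B \<circ> K)) \<longlonglongrightarrow> 0"
    using assms(1) K by (simp add: Plim_def)
  from LIMSEQ_subseq_LIMSEQ[OF this assms(2)]
  show "(\<lambda>n. opnorm p (K \<circ> opdiff (An (r n)) B) + opnorm p (opdiff (An (r n)) B \<circ> K)) \<longlonglongrightarrow> 0"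
    by (simp add: o_def)
qed

lemma tends_to_inf_subseq:
  assumes "tends_to_inf g" "strict_mono r" shows "tends_to_inf (\<lambda>n. g (r n))"
  unfolding tends_to_inf_def
proof (intro allI impI)
  fix F :: "'a set" assume "finite F"
  then obtain N where N: "\<forall>n\<ge>N. g n \<notin> F" using assms(1) by (auto simp: tends_to_inf_def eventually_sequentially)
  have "\<forall>n\<ge>N. g (r n) \<notin> F"
    using N seq_suble[OF assms(2)] le_trans by blast
  then show "eventually (\<lambda>n. g (r n) \<notin> F) sequentially" by (auto simp: eventually_sequentially)
qed

theorem proposition4p2:
  fixes p :: ennreal
    and J :: "'y::banach \<Rightarrow> 'y"
    and Gs :: "nat \<Rightarrow> 'g::{group_add, countable} set"
    and \<alpha> :: "'g \<Rightarrow> 'w::metric_space \<Rightarrow> 'w"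
    and A :: "'w \<Rightarrow> ('g \<Rightarrow> 'y) \<Rightarrow> ('g \<Rightarrow> 'y)"
    and \<omega> :: 'w
  assumes "p \<ge> 1"
    and "complex_structure J"
    and "admissible_Gs Gs"
    and "dyn_system \<alpha>"
    and "op_family p J Gs \<alpha> A"
  shows "op_spectrum p J Gs (A \<omega>) = A ` limit_set \<alpha> \<omega>"
proof
  have Aeq: "A (\<alpha> g \<omega>') = Vop p g \<circ> A \<omega>' \<circ> Vop p (- g)" for g \<omega>'
    using assms(5) by (simp add: op_family_def)
  have Acont: "\<And>\<omega>s \<omega>'. \<omega>s \<longlonglongrightarrow> \<omega>' \<Longrightarrow> Plim p J Gs (\<lambda>n. A (\<omega>s n)) (A \<omega>')"
    using assms(5) by (simp add: op_family_def)
  have Aop: "is_op p J (A \<omega>')" for \<omega>'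
    using assms(5) by (simp add: op_family_def LXP_def)
  show "A ` limit_set \<alpha> \<omega> \<subseteq> op_spectrum p J Gs (A \<omega>)"
  proof
    fix C assume "C \<in> A ` limit_set \<alpha> \<omega>"
    then obtain \<nu> g where g: "tends_to_inf g" "(\<lambda>n. \<alpha> (g n) \<omega>) \<longlonglongrightarrow> \<nu>" and C: "C = A \<nu>"
      by (auto simp: limit_set_def)
    have "Plim p J Gs (\<lambda>n. A (\<alpha> (g n) \<omega>)) (A \<nu>)" by (rule Acont[OF g(2)])
    then have "Plim p J Gs (\<lambda>n. Vop p (g n) \<circ> A \<omega> \<circ> Vop p (- g n)) C" by (simp add: Aeq C)
    then show "C \<in> op_spectrum p J Gs (A \<omega>)" using g(1) by (auto simp: op_spectrum_def)
  qed
  show "op_spectrum p J Gs (A \<omega>) \<subseteq> A ` limit_set \<alpha> \<omega>"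
  proof
    fix C assume "C \<in> op_spectrum p J Gs (A \<omega>)"
    then obtain g where g: "tends_to_inf g" and PC: "Plim p J Gs (\<lambda>n. Vop p (g n) \<circ> A \<omega> \<circ> Vop p (- g n)) C"
      by (auto simp: op_spectrum_def)
    have "compact (UNIV :: 'w set)" using assms(4) by (simp add: dyn_system_def)
    then have "seq_compact (UNIV :: 'w set)" by (rule compact_imp_seq_compact)
    then obtain \<nu> r where r: "strict_mono r" and conv: "((\<lambda>n. \<alpha> (g n) \<omega>) \<circ> r) \<longlonglongrightarrow> \<nu>"
      unfolding seq_compact_def by blast
    have conv': "(\<lambda>n. \<alpha> (g (r n)) \<omega>) \<longlonglongrightarrow> \<nu>" using conv by (simp add: o_def)
    have gr: "tends_to_inf (\<lambda>n. g (r n))" by (rule tends_to_inf_subseq[OF g r])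
    have nu: "\<nu> \<in> limit_set \<alpha> \<omega>" using gr conv' by (auto simp: limit_set_def)
    have P1: "Plim p J Gs (\<lambda>n. A (\<alpha> (g (r n)) \<omega>)) (A \<nu>)" by (rule Acont[OF conv'])
    have "Plim p J Gs (\<lambda>n. Vop p (g (r n)) \<circ> A \<omega> \<circ> Vop p (- g (r n))) C"
      by (rule Plim_subseq[OF PC r])
    then have P2: "Plim p J Gs (\<lambda>n. A (\<alpha> (g (r n)) \<omega>)) C" by (simp add: Aeq)
    have "C = A \<nu>"
      by (rule Plim_unique[OF assms(1,2,3) Aop P2 P1])
    then show "C \<in> A ` limit_set \<alpha> \<omega>" using nu by simp
  qed
qed

end
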